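(* Let $d\geq 1$ be an integer and let $e_0,\dots,e_{d-1}$ be the standard basis of $\mathbb{C}^d$; write $\mathcal{B}^0=\{e_0,\dots,e_{d-1}\}$. Let $(p_n)_{n=0}^\infty$ be a sequence of orthogonal polynomials, i.e. each $p_n$ is a real polynomial of degree exactly $n$ and there is a positive weight function $w$ on $\mathbb{R}$ with $\int_{-\infty}^{\infty}p_j(x)p_i(x)w(x)\,dx=\delta_{ij}$ for all $i,j$. Let $x_0,\dots,x_{d-1}$ be the (real, distinct) zeros of $p_d$ and $y_0,\dots,y_{d-2}$ the (real, distinct) zeros of $p_{d-1}$ (there are none if $d=1$). Fix $\alpha\in\mathbb{R}$ such that $e^{ij\alpha}\notin\mathbb{R}$ for all $j\in\{1,\dots,d-1\}$. For $j=0,\dots,d-1$ define $$v^1_j=\big(p_0(x_j),p_1(x_j),\dots,p_{d-1}(x_j)\big),\qquad v^2_j=\big(p_0(x_j),e^{i\alpha}p_1(x_j),\dots,e^{i(d-1)\alpha}p_{d-1}(x_j)\big),$$ for $j=0,\dots,d-2$ define $$v^3_j=\big(p_0(y_j),p_1(y_j),\dots,p_{d-2}(y_j),0\big),\qquad v^4_j=\big(p_0(y_j),e^{i\alpha}p_1(y_j),\dots,e^{i(d-2)\alpha}p_{d-2}(y_j),0\big),$$ and set $v^3_{d-1}=v^4_{d-1}=e_{d-1}$. For $\ell=1,2,3,4$ let $\mathcal{B}^\ell=\{v^\ell_j/\|v^\ell_j\| : j=0,\dots,d-1\}$ (these are orthonormal bases of $\mathbb{C}^d$). Then the five orthonormal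 bases $\mathcal{B}^0,\dots,\mathcal{B}^4$ determine any pure state among all states: for every unit vector $\psi\in\mathbb{C}^d$ and every density matrix $\varrho$ on $\mathbb{C}^d$, if $|\langle v\mid\psi\rangle|^2=\langle v\mid \varrho\, v\rangle$ for every $v\in\mathcal{B}^0\cup\mathcal{B}^1\cup\mathcal{B}^2\cup\mathcal{B}^3\cup\mathcal{B}^4$, then $\varrho=|\psi\rangle\langle\psi|$.
   Context: A density matrix (state) is a positive semidefinite $d\times d$ complex matrix of trace one; a pure state is one of the form $|\psi\rangle\langle\psi|$ with $\psi$ a unit vector. The inner product $\langle\cdot\mid\cdot\rangle$ on $\mathbb{C}^d$ is linear in the second argument. *)

theory Defs
  imports "HOL-Analysis.Analysis" "HOL-Computational_Algebra.Polynomial"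
begin

text \<open>Vectors in C^d are represented as functions nat => complex, only the
coordinates 0..d-1 being relevant; d x d matrices as nat => nat => complex.\<close>

definition cinner :: "nat \<Rightarrow> (nat \<Rightarrow> complex) \<Rightarrow> (nat \<Rightarrow> complex) \<Rightarrow> complex" where
  "cinner d u v = (\<Sum>k<d. cnj (u k) * v k)"

definition cvnorm :: "nat \<Rightarrow> (nat \<Rightarrow> complex) \<Rightarrow> real" where
  "cvnorm d v = sqrt (\<Sum>k<d. (cmod (v k))\<^sup>2)"

definition matvec :: "nat \<Rightarrow> (nat \<Rightarrow> nat \<Rightarrow> complex) \<Rightarrow> (nat \<Rightarrow> complex) \<Rightarrow> (nat \<Rightarrow> complex)" where
  "matvec d A v = (\<lambda>k. \<Sum>l<d. A k l * v l)"

definition density_matrix :: "nat \<Rightarrow> (nat \<Rightarrow> nat \<Rightarrow> complex) \<Rightarrow> bool" where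
  "density_matrix d \<rho> \<longleftrightarrow>
     (\<forall>v. Im (cinner d v (matvec d \<rho> v)) = 0 \<and> Re (cinner d v (matvec d \<rho> v)) \<ge> 0)
     \<and> (\<Sum>k<d. \<rho> k k) = 1"

definition orthonormal_polys :: "(nat \<Rightarrow> real poly) \<Rightarrow> bool" where
  "orthonormal_polys p \<longleftrightarrow> (\<forall>n. degree (p n) = n) \<and>
     (\<exists>w::real \<Rightarrow> real. (\<forall>x. w x > 0) \<and>
        (\<forall>i j. has_bochner_integral lborel (\<lambda>x. poly (p j) x * poly (p i) x * w x)
                 (if i = j then 1 else 0)))"

definition std_basis_vec :: "nat \<Rightarrow> (nat \<Rightarrow> complex)" where
  "std_basis_vec j = (\<lambda>k. if k = j then 1 else 0)"

definition normalize_vec :: "nat \<Rightarrow> (nat \<Rightarrow> complex) \<Rightarrow> (nat \<Rightarrow> complex)" where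
  "normalize_vec d v = (\<lambda>k. v k / complex_of_real (cvnorm d v))"

definition vec_x :: "nat \<Rightarrow> (nat \<Rightarrow> real poly) \<Rightarrow> real \<Rightarrow> real \<Rightarrow> (nat \<Rightarrow> complex)" where
  "vec_x d p \<alpha> t = (\<lambda>k. if k < d then exp (\<i> * of_nat k * of_real \<alpha>) * of_real (poly (p k) t) else 0)"

definition vec_y :: "nat \<Rightarrow> (nat \<Rightarrow> real poly) \<Rightarrow> real \<Rightarrow> real \<Rightarrow> (nat \<Rightarrow> complex)" where
  "vec_y d p \<alpha> t = (\<lambda>k. if k < d - 1 then exp (\<i> * of_nat k * of_real \<alpha>) * of_real (poly (p k) t) else 0)"

definition basis0 :: "nat \<Rightarrow> (nat \<Rightarrow> complex) set" where
  "basis0 d = {std_basis_vec j | j. j < d}"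

definition basis1 :: "nat \<Rightarrow> (nat \<Rightarrow> real poly) \<Rightarrow> (nat \<Rightarrow> real) \<Rightarrow> (nat \<Rightarrow> complex) set" where
  "basis1 d p x = {normalize_vec d (vec_x d p 0 (x j)) | j. j < d}"

definition basis2 :: "nat \<Rightarrow> (nat \<Rightarrow> real poly) \<Rightarrow> real \<Rightarrow> (nat \<Rightarrow> real) \<Rightarrow> (nat \<Rightarrow> complex) set" where
  "basis2 d p \<alpha> x = {normalize_vec d (vec_x d p \<alpha> (x j)) | j. j < d}"

definition basis3 :: "nat \<Rightarrow> (nat \<Rightarrow> real poly) \<Rightarrow> (nat \<Rightarrow> real) \<Rightarrow> (nat \<Rightarrow> complex) set" where
  "basis3 d p y = {normalize_vec d (vec_y d p 0 (y j)) | j. j < d - 1}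
                  \<union> {normalize_vec d (std_basis_vec (d - 1))}"

definition basis4 :: "nat \<Rightarrow> (nat \<Rightarrow> real poly) \<Rightarrow> real \<Rightarrow> (nat \<Rightarrow> real) \<Rightarrow> (nat \<Rightarrow> complex) set" where
  "basis4 d p \<alpha> y = {normalize_vec d (vec_y d p \<alpha> (y j)) | j. j < d - 1}
                  \<union> {normalize_vec d (std_basis_vec (d - 1))}"

end

theory Submission
  imports Defs
begin


lemma poly_of_real_map: "poly (map_poly of_real q) (of_real t) = (of_real (poly q t) :: complex)"
  by (induction q) (auto simp: map_poly_pCons)

lemma matvec_diff: "matvec d (\<lambda>k l. A k l - B k l) v = (\<lambda>k. matvec d A v k - matvec d B v k)"
  by (auto simp: matvec_def sum_subtractf algebra_simps)

lemma cinner_diff: "cinner d v (\<lambda>k. a k - b k) = cinner d v a - cinner d v b"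
  by (auto simp: cinner_def sum_subtractf algebra_simps)

lemma form_rank1: "cinner d v (matvec d (\<lambda>k l. \<psi> k * cnj (\<psi> l)) v) = of_real ((cmod (cinner d v \<psi>))\<^sup>2)"
proof -
  have "matvec d (\<lambda>k l. \<psi> k * cnj (\<psi> l)) v = (\<lambda>k. \<psi> k * cnj (cinner d v \<psi>))"
    by (auto simp: matvec_def cinner_def sum_distrib_left algebra_simps)
  then have "cinner d v (matvec d (\<lambda>k l. \<psi> k * cnj (\<psi> l)) v) = cinner d v \<psi> * cnj (cinner d v \<psi>)"
    by (simp add: cinner_def sum_distrib_right algebra_simps)
  also have "\<dots> = of_real ((cmod (cinner d v \<psi>))\<^sup>2)"
    by (metis complex_norm_square of_real_power)
  finally show ?thesis .
qed

lemma form_normalize: "cinner d (normalize_vec d v) (matvec d A (normalize_vec d v)) =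
   cinner d v (matvec d A v) / (of_real (cvnorm d v))\<^sup>2"
proof -
  define c where "c = complex_of_real (cvnorm d v)"
  have cc: "cnj c = c" by (simp add: c_def)
  have "matvec d A (normalize_vec d v) = (\<lambda>k. matvec d A v k / c)"
    by (auto simp: matvec_def normalize_vec_def c_def sum_divide_distrib)
  then have "cinner d (normalize_vec d v) (matvec d A (normalize_vec d v)) = (\<Sum>k<d. cnj (v k) * matvec d A v k / (c * c))"
    by (simp add: cinner_def normalize_vec_def cc[unfolded c_def] c_def)
  also have "\<dots> = cinner d v (matvec d A v) / c\<^sup>2"
    by (simp add: cinner_def sum_divide_distrib power2_eq_square)
  finally show ?thesis by (simp add: c_def)
qed

lemma form_two: assumes "k \<noteq> l" "k < d" "l < d"
  shows "cinner d (\<lambda>i. if i = k then a else if i = l then b else 0) (matvec d A (\<lambda>i. if i = k then a else if i = l then b else 0))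
     = cnj a * A k k * a + cnj a * A k l * b + cnj b * A l k * a + cnj b * A l l * b"
proof -
  have v: "(\<lambda>i. if i = k then a else if i = l then b else 0) = (\<lambda>i. (if i = k then a else 0) + (if i = l then b else 0))"
    using assms by auto
  have mv: "matvec d A (\<lambda>i. (if i = k then a else 0) + (if i = l then b else 0)) = (\<lambda>i. A i k * a + A i l * b)"
  proof
    fix i
    have e1: "(\<Sum>j<d. A i j * (if j = k then a else 0)) = A i k * a"
    proof -
      have "(\<lambda>j. A i j * (if j = k then a else 0)) = (\<lambda>j. if j = k then A i k * a else 0)" (is "?f = ?g") by auto
      then have "(\<Sum>j<d. ?f j) = sum ?g {..<d}" by (rule arg_cong)
      also have "sum ?g {..<d} = ?g k" using assms by (subst sum.delta) auto
      finally show ?thesis by simp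
    qed
    have e2: "(\<Sum>j<d. A i j * (if j = l then b else 0)) = A i l * b"
    proof -
      have "(\<lambda>j. A i j * (if j = l then b else 0)) = (\<lambda>j. if j = l then A i l * b else 0)" (is "?f = ?g") by auto
      then have "(\<Sum>j<d. ?f j) = sum ?g {..<d}" by (rule arg_cong)
      also have "sum ?g {..<d} = ?g l" using assms by (subst sum.delta) auto
      finally show ?thesis by simp
    qed
    show "matvec d A (\<lambda>i. (if i = k then a else 0) + (if i = l then b else 0)) i = A i k * a + A i l * b"
      unfolding matvec_def distrib_left sum.distrib e1 e2 ..
  qed
  have e: "\<And>f c j. j < d \<Longrightarrow> (\<Sum>i<d. cnj (if i = j then c else 0) * f i) = cnj c * f j"
  proof -
    fix f c j assume "j < (d::nat)"
    have "(\<lambda>i. cnj (if i = j then c else 0) * f i) = (\<lambda>i. if i = j then cnj c * f j else 0)" (is "?f = ?g") by auto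
    then have "(\<Sum>i<d. ?f i) = sum ?g {..<d}" by (rule arg_cong)
    also have "sum ?g {..<d} = ?g j" using \<open>j < d\<close> by (subst sum.delta) auto
    finally show "(\<Sum>i<d. cnj (if i = j then c else 0) * f i) = cnj c * f j" by simp
  qed
  have "cinner d (\<lambda>i. (if i = k then a else 0) + (if i = l then b else 0)) (\<lambda>i. A i k * a + A i l * b)
     = cnj a * (A k k * a + A k l * b) + cnj b * (A l k * a + A l l * b)"
    unfolding cinner_def complex_cnj_add distrib_right sum.distrib e[OF assms(2)] e[OF assms(3)] ..
  then show ?thesis unfolding v mv by (simp add: algebra_simps)
qed

lemma form_add: "cinner d (\<lambda>i. u i + c * w i) (matvec d A (\<lambda>i. u i + c * w i)) =
   cinner d u (matvec d A u) + c * cinner d u (matvec d A w) + cnj c * cinner d w (matvec d A u) + cnj c * c * cinner d w (matvec d A w)"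
  by (simp add: cinner_def matvec_def sum.distrib sum_distrib_left algebra_simps)

lemma quad_zero: fixes a b :: real assumes "\<forall>t. a * t + b * t\<^sup>2 \<ge> 0" "b \<ge> 0" shows "a = 0"
proof (rule ccontr)
  assume "a \<noteq> 0"
  define t where "t = - a / (b + 1)"
  have nz: "b + 1 \<noteq> 0" using assms(2) by simp
  have "a * t + b * t\<^sup>2 = (- a\<^sup>2 * (b + 1) + b * a\<^sup>2) / (b+1)\<^sup>2"
    using nz unfolding t_def power2_eq_square by (simp add: divide_simps)
  also have "\<dots> = - a\<^sup>2 / (b+1)\<^sup>2"
    by (simp add: algebra_simps)
  also have "\<dots> < 0" using \<open>a \<noteq> 0\<close> assms(2) by (simp add: divide_neg_pos)
  finally show False using assms(1) by (metis not_le)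
qed

lemma cinner_std: "l < d \<Longrightarrow> cinner d (std_basis_vec l) z = z l"
proof -
  assume "l < d"
  have "(\<lambda>k. cnj (std_basis_vec l k) * z k) = (\<lambda>k. if k = l then z l else 0)" (is "?f = ?g")
    by (auto simp: std_basis_vec_def)
  then have "cinner d (std_basis_vec l) z = sum ?g {..<d}" unfolding cinner_def by (rule arg_cong)
  also have "\<dots> = z l" using \<open>l < d\<close> by (subst sum.delta) auto
  finally show ?thesis .
qed

definition psd :: "nat \<Rightarrow> (nat \<Rightarrow> nat \<Rightarrow> complex) \<Rightarrow> bool" where
  "psd d A \<longleftrightarrow> (\<forall>v. Im (cinner d v (matvec d A v)) = 0 \<and> Re (cinner d v (matvec d A v)) \<ge> 0)"

lemma psd_kernel:
  assumes "psd d A" "cinner d u (matvec d A u) = 0" "l < d"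
  shows "matvec d A u l = 0"
proof -
  define w where "w = std_basis_vec l"
  define X where "X = cinner d u (matvec d A w)"
  define Y where "Y = cinner d w (matvec d A u)"
  define B where "B = cinner d w (matvec d A w)"
  have Y: "Y = matvec d A u l" using assms(3) by (simp add: Y_def w_def cinner_std)
  have F: "\<And>c. cinner d (\<lambda>i. u i + c * w i) (matvec d A (\<lambda>i. u i + c * w i)) = c * X + cnj c * Y + cnj c * c * B"
    using assms(2) by (simp add: form_add X_def Y_def B_def)
  have B: "Im B = 0" "Re B \<ge> 0" using assms(1) by (auto simp: psd_def B_def)
  have r1: "Re (X + Y) * t + Re B * t\<^sup>2 \<ge> 0" for t
  proof -
    have "Re (complex_of_real t * X + cnj (complex_of_real t) * Y + cnj (complex_of_real t) * complex_of_real t * B) \<ge> 0"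
      using assms(1) F[of "complex_of_real t"] unfolding psd_def by metis
    then show ?thesis using B by (simp add: power2_eq_square algebra_simps)
  qed
  have r2: "(Im Y - Im X) * t + Re B * t\<^sup>2 \<ge> 0" for t
  proof -
    have "Re ((\<i> * t) * X + cnj (\<i> * t) * Y + cnj (\<i> * t) * (\<i> * t) * B) \<ge> 0"
      using assms(1) F[of "\<i> * t"] unfolding psd_def by metis
    then show ?thesis using B by (simp add: power2_eq_square algebra_simps)
  qed
  have i1: "Im (X + Y) = 0"
  proof -
    have "Im (complex_of_real 1 * X + cnj (complex_of_real 1) * Y + cnj (complex_of_real 1) * complex_of_real 1 * B) = 0"
      using assms(1) F[of "complex_of_real 1"] unfolding psd_def by metis
    then show ?thesis using B by simp
  qed
  have i2: "Re X - Re Y = 0"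
  proof -
    have "Im (\<i> * X + cnj \<i> * Y + cnj \<i> * \<i> * B) = 0"
      using assms(1) F[of "\<i>"] unfolding psd_def by metis
    then show ?thesis using B by simp
  qed
  have "Re (X + Y) = 0" using quad_zero[of "Re (X+Y)" "Re B"] r1 B by auto
  moreover have "Im Y - Im X = 0" using quad_zero[of "Im Y - Im X" "Re B"] r2 B by auto
  ultimately have "Y = 0" using i1 i2 by (simp add: complex_eq_iff)
  then show ?thesis using Y by simp
qed

lemma psd_herm:
  assumes "psd d A" "k < d" "l < d"
  shows "A k l = cnj (A l k)"
proof -
  have dg: "\<And>j. j < d \<Longrightarrow> cinner d (std_basis_vec j) (matvec d A (std_basis_vec j)) = A j j"
    proof -
      fix j assume j: "j < d"
      have "(\<lambda>i. A j i * std_basis_vec j i) = (\<lambda>i. if i = j then A j j else 0)" (is "?f = ?g")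
        by (auto simp: std_basis_vec_def)
      then have "matvec d A (std_basis_vec j) j = sum ?g {..<d}" unfolding matvec_def by (rule arg_cong)
      also have "\<dots> = A j j" using j by (subst sum.delta) auto
      finally show "cinner d (std_basis_vec j) (matvec d A (std_basis_vec j)) = A j j"
        using j by (simp add: cinner_std)
    qed
  have ps: "\<And>v. Im (cinner d v (matvec d A v)) = 0" using assms(1) unfolding psd_def by blast
  have ikk: "Im (A k k) = 0" using ps[of "std_basis_vec k"] dg[OF assms(2)] by simp
  have ill: "Im (A l l) = 0" using ps[of "std_basis_vec l"] dg[OF assms(3)] by simp
  show ?thesis
proof (cases "k = l")
  case True
  then show ?thesis using ikk by (simp add: complex_eq_iff)
next
  case False
  note f = form_two[OF False assms(2,3), of _ _ A]
  have "Im (cnj 1 * A k k * 1 + cnj 1 * A k l * 1 + cnj 1 * A l k * 1 + cnj 1 * A l l * 1) = 0"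
    using ps[of "\<lambda>i. if i = k then 1 else if i = l then 1 else 0"] unfolding f[of 1 1] .
  then have h1: "Im (A k l) + Im (A l k) = 0" using ikk ill by simp
  have "Im (cnj 1 * A k k * 1 + cnj 1 * A k l * \<i> + cnj \<i> * A l k * 1 + cnj \<i> * A l l * \<i>) = 0"
    using ps[of "\<lambda>i. if i = k then 1 else if i = l then \<i> else 0"] unfolding f[of 1 "\<i>"] .
  then have h2: "Re (A k l) - Re (A l k) = 0" using ikk ill by simp
  show ?thesis using h1 h2 by (intro complex_eqI) auto
qed
qed




lemma op_nz:
  assumes "\<And>i j. has_bochner_integral lborel (\<lambda>x. poly (p j) x * poly (p i) x * w x) (if i = j then 1 else (0::real))"
  shows "p k \<noteq> 0"
proof
  assume "p k = 0"
  then have "has_bochner_integral lborel (\<lambda>x. poly (p k) x * poly (p k) x * w x) (0::real)"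
    using has_bochner_integral_zero by simp
  moreover have "has_bochner_integral lborel (\<lambda>x. poly (p k) x * poly (p k) x * w x) (1::real)"
    using assms[of k k] by simp
  ultimately show False using has_bochner_integral_integral_eq
    by (metis zero_neq_one)
qed

lemma op_span:
  assumes "\<And>k. degree (p k) = k" "\<And>k. p k \<noteq> 0"
  shows "degree q \<le> N \<Longrightarrow> \<exists>c. q = (\<Sum>k\<le>N. smult (c k) (p k :: 'a::field poly))"
proof (induction N arbitrary: q)
  case 0
  define c where "c = coeff q 0 / coeff (p 0) 0"
  have p0: "coeff (p 0) 0 \<noteq> 0" using assms[of 0] by (metis leading_coeff_0_iff)
  have "q = smult c (p 0)"
  proof (rule poly_eqI)
    fix i show "coeff q i = coeff (smult c (p 0)) i"
    proof (cases i)
      case 0 then show ?thesis using p0 by (simp add: c_def)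
    next
      case (Suc j)
      then have "coeff q i = 0" using "0.prems" by (simp add: coeff_eq_0)
      moreover have "coeff (p 0) i = 0" using assms(1)[of 0] Suc by (simp add: coeff_eq_0)
      ultimately show ?thesis by simp
    qed
  qed
  then show ?case by (intro exI[of _ "\<lambda>_. c"]) simp
next
  case (Suc N)
  define s where "s = coeff q (Suc N) / lead_coeff (p (Suc N))"
  define r where "r = q - smult s (p (Suc N))"
  have lc: "lead_coeff (p (Suc N)) \<noteq> 0" using assms(2) by simp
  have "degree r \<le> N"
  proof (rule degree_le, intro allI impI)
    fix i assume "N < i"
    show "coeff r i = 0"
    proof (cases "i = Suc N")
      case True then show ?thesis using lc assms(1)[of "Suc N"] by (simp add: r_def s_def)
    next
      case False
      then have "i > Suc N" using \<open>N < i\<close> by simp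
      then show ?thesis using Suc.prems assms(1)[of "Suc N"] by (simp add: r_def coeff_eq_0)
    qed
  qed
  then obtain c where c: "r = (\<Sum>k\<le>N. smult (c k) (p k))" using Suc.IH by blast
  have "q = (\<Sum>k\<le>Suc N. smult ((c(Suc N := s)) k) (p k))"
  proof -
    have "(\<Sum>k\<le>N. smult ((c(Suc N := s)) k) (p k)) = (\<Sum>k\<le>N. smult (c k) (p k))"
      by (intro sum.cong) auto
    moreover have "q = r + smult s (p (Suc N))" by (simp add: r_def)
    ultimately show ?thesis using c by simp
  qed
  then show ?case by blast
qed

lemma op_orth:
  assumes orth: "\<And>i j. has_bochner_integral lborel (\<lambda>x. poly (p j) x * poly (p i) x * w x) (if i = j then 1 else (0::real))"
    and deg: "\<And>k. degree (p k) = k" and "degree q < n"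
  shows "has_bochner_integral lborel (\<lambda>x. poly (p n) x * poly q x * w x) 0"
proof -
  have nz: "\<And>k. p k \<noteq> 0" using op_nz[OF orth] by blast
  obtain c where c: "q = (\<Sum>k\<le>degree q. smult (c k) (p k))" using op_span[OF deg nz, of q "degree q"] by blast
  have "(\<lambda>x. poly (p n) x * poly q x * w x) = (\<lambda>x. \<Sum>k\<le>degree q. c k * (poly (p n) x * poly (p k) x * w x))"
    by (subst c) (simp add: poly_sum sum_distrib_left sum_distrib_right algebra_simps)
  moreover have "has_bochner_integral lborel (\<lambda>x. \<Sum>k\<le>degree q. c k * (poly (p n) x * poly (p k) x * w x)) (\<Sum>k\<le>degree q. c k * 0)"
  proof (rule has_bochner_integral_sum)
    fix k assume "k \<in> {..degree q}"
    then have "k \<noteq> n" using assms(3) by auto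
    then show "has_bochner_integral lborel (\<lambda>x. c k * (poly (p n) x * poly (p k) x * w x)) (c k * 0)"
      using orth[of n k] by (intro has_bochner_integral_mult_right) simp
  qed
  ultimately show ?thesis by simp
qed

lemma op_nocommon:
  assumes "orthonormal_polys p" "poly (p (Suc n)) z = 0" "poly (p n) z = 0"
  shows False
proof -
  obtain w where orth: "\<And>i j. has_bochner_integral lborel (\<lambda>x. poly (p j) x * poly (p i) x * w x) (if i = j then 1 else (0::real))"
    using assms(1) unfolding orthonormal_polys_def by blast
  have deg: "\<And>k. degree (p k) = k" using assms(1) unfolding orthonormal_polys_def by blast
  have nz: "\<And>k. p k \<noteq> 0" using op_nz[OF orth] by blast
  show False
  proof (cases n)
    case 0
    have "poly (p 0) z = coeff (p 0) 0"
    proof -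
      have e: "[:coeff (p 0) 0:] = p 0" by (rule degree_0_id[OF deg[of 0]])
      have h: "poly [:coeff (p 0) 0:] z = coeff (p 0) 0" by simp
      show ?thesis using h unfolding e .
    qed
    moreover have "coeff (p 0) 0 \<noteq> 0" using nz[of 0] deg[of 0] by (metis leading_coeff_0_iff)
    ultimately show False using assms(3) 0 by simp
  next
    case (Suc n')
    then have n1: "n \<ge> 1" by simp
    obtain h where h: "p (Suc n) = [:-z, 1:] * h" using assms(2) by (metis poly_eq_0_iff_dvd dvd_def)
    obtain g where g: "p n = [:-z, 1:] * g" using assms(3) by (metis poly_eq_0_iff_dvd dvd_def)
    have hnz: "h \<noteq> 0" using h nz[of "Suc n"] by auto
    have gnz: "g \<noteq> 0" using g nz[of n] by auto
    have l1: "degree [:-z, 1:] = 1" by simp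
    have "degree (p (Suc n)) = degree [:-z, 1:] + degree h" unfolding h by (rule degree_mult_eq) (use hnz in auto)
    then have dh: "degree h = n" using deg[of "Suc n"] l1 by simp
    have "degree (p n) = degree [:-z, 1:] + degree g" unfolding g by (rule degree_mult_eq) (use gnz in auto)
    then have dg: "degree g < Suc n" using deg[of n] l1 by simp
    have I1: "has_bochner_integral lborel (\<lambda>x. poly (p (Suc n)) x * poly g x * w x) 0"
      by (rule op_orth[OF orth deg dg])
    have feq: "(\<lambda>x. poly (p (Suc n)) x * poly g x * w x) = (\<lambda>x. poly (p n) x * poly h x * w x)"
      by (simp add: h g algebra_simps)
    define s where "s = lead_coeff h / lead_coeff (p n)"
    define r where "r = h - smult s (p n)"
    have lc: "lead_coeff (p n) \<noteq> 0" using nz by simp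
    have dr: "degree r < n"
    proof -
      have "degree r \<le> n" unfolding r_def using dh deg[of n] by (metis degree_diff_le degree_smult_le le_trans max.bounded_iff order.refl)
      moreover have "coeff r n = 0" using lc dh deg[of n] by (simp add: r_def s_def)
      ultimately show ?thesis using n1
        by (metis le_neq_implies_less leading_coeff_0_iff not_one_le_zero degree_0 neq0_conv)
    qed
    have I2: "has_bochner_integral lborel (\<lambda>x. poly (p n) x * poly r x * w x) 0"
      by (rule op_orth[OF orth deg dr])
    have I3: "has_bochner_integral lborel (\<lambda>x. s * (poly (p n) x * poly (p n) x * w x)) (s * 1)"
      using orth[of n n] by (intro has_bochner_integral_mult_right) simp
    have "has_bochner_integral lborel (\<lambda>x. s * (poly (p n) x * poly (p n) x * w x) + poly (p n) x * poly r x * w x) (s * 1 + 0)"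
      by (rule has_bochner_integral_add[OF I3 I2])
    moreover have "(\<lambda>x. s * (poly (p n) x * poly (p n) x * w x) + poly (p n) x * poly r x * w x) = (\<lambda>x. poly (p n) x * poly h x * w x)"
      by (simp add: r_def algebra_simps)
    ultimately have "has_bochner_integral lborel (\<lambda>x. poly (p n) x * poly h x * w x) s" by simp
    then have "integral\<^sup>L lborel (\<lambda>x. poly (p n) x * poly h x * w x) = s" by (rule has_bochner_integral_integral_eq)
    moreover have "integral\<^sup>L lborel (\<lambda>x. poly (p n) x * poly h x * w x) = 0"
      using has_bochner_integral_integral_eq[OF I1] unfolding feq .
    ultimately have "s = 0" by simp
    then have "lead_coeff h = 0" using lc by (simp add: s_def)
    then show False using hnz by simp
  qed
qed




definition Eph :: "real \<Rightarrow> nat \<Rightarrow> complex" where "Eph a k = exp (\<i> * of_nat k * of_real a)"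

definition PP :: "nat \<Rightarrow> (nat \<Rightarrow> real poly) \<Rightarrow> real \<Rightarrow> (nat \<Rightarrow> nat \<Rightarrow> complex) \<Rightarrow> complex poly" where
  "PP d p a A = (\<Sum>k<d. \<Sum>l<d. smult (cnj (Eph a k) * A k l * Eph a l) (map_poly of_real (p k * p l)))"

lemma PP_eval: "poly (PP d p a A) (of_real t) = cinner d (vec_x d p a t) (matvec d A (vec_x d p a t))"
proof -
  have "poly (PP d p a A) (of_real t) = (\<Sum>k<d. \<Sum>l<d. cnj (Eph a k) * A k l * Eph a l * (of_real (poly (p k) t) * of_real (poly (p l) t)))"
    by (simp add: PP_def poly_sum poly_of_real_map)
  also have "\<dots> = (\<Sum>k<d. cnj (Eph a k * of_real (poly (p k) t)) * (\<Sum>l<d. A k l * (Eph a l * of_real (poly (p l) t))))"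
    by (simp add: sum_distrib_left algebra_simps)
  also have "\<dots> = cinner d (vec_x d p a t) (matvec d A (vec_x d p a t))"
  proof -
    have vx: "\<And>k. k \<in> {..<d} \<Longrightarrow> vec_x d p a t k = Eph a k * of_real (poly (p k) t)"
      by (simp add: vec_x_def Eph_def)
    show ?thesis unfolding cinner_def matvec_def
      by (intro sum.cong refl arg_cong2[where f = "(*)"]) (simp_all add: vx)
  qed
  finally show ?thesis .
qed

lemma PP_coeff: "coeff (PP d p a A) N = (\<Sum>k<d. \<Sum>l<d. cnj (Eph a k) * A k l * Eph a l * of_real (coeff (p k * p l) N))"
  by (simp add: PP_def coeff_sum coeff_map_poly)

lemma sum2_delta:
  fixes A B :: complex and n m d :: nat
  assumes "n \<noteq> m" "n < d" "m < d"
  shows "(\<Sum>k<d. \<Sum>l<d. if k = n \<and> l = m then A else if k = m \<and> l = n then B else 0) = A + B"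
proof -
  have sd: "\<And>j c. j < d \<Longrightarrow> (\<Sum>l<d. if l = j then c else (0::complex)) = c" by (subst sum.delta) auto
  have inner: "(\<Sum>l<d. if k = n \<and> l = m then A else if k = m \<and> l = n then B else 0) =
     (if k = n then A else if k = m then B else 0)" for k
  proof (cases "k = n")
    case True
    then have "(\<lambda>l. if k = n \<and> l = m then A else if k = m \<and> l = n then B else 0) = (\<lambda>l. if l = m then A else 0)"
      using assms(1) by auto
    note eq = this
      show ?thesis unfolding eq using sd True assms by simp
  next
    case False
    show ?thesis
    proof (cases "k = m")
      case True
      then have "(\<lambda>l. if k = n \<and> l = m then A else if k = m \<and> l = n then B else 0) = (\<lambda>l. if l = n then B else 0)"
        using False by auto
      note eq = this
      show ?thesis unfolding eq using sd True False assms by simp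
    next
      case False2: False
      then have "(\<lambda>l. if k = n \<and> l = m then A else if k = m \<and> l = n then B else 0) = (\<lambda>l. 0)"
        using False by auto
      note eq = this
      show ?thesis unfolding eq using sd False False2 by simp
    qed
  qed
  have "(\<Sum>k<d. \<Sum>l<d. if k = n \<and> l = m then A else if k = m \<and> l = n then B else 0)
     = (\<Sum>k<d. (if k = n then A else 0) + (if k = m then B else 0))"
    unfolding inner using assms(1) by (intro sum.cong) auto
  also have "\<dots> = A + B" using assms by (simp add: sum.distrib)
  finally show ?thesis .
qed

lemma form_std: "j < d \<Longrightarrow> cinner d (std_basis_vec j) (matvec d A (std_basis_vec j)) = A j j"
  and matvec_std: "k < d \<Longrightarrow> matvec d A (std_basis_vec k) l = A l k"
proof -
  assume k: "k < d"
  have "(\<lambda>i. A l i * std_basis_vec k i) = (\<lambda>i. if i = k then A l k else 0)" (is "?f = ?g")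
    by (auto simp: std_basis_vec_def)
  then have "matvec d A (std_basis_vec k) l = sum ?g {..<d}" unfolding matvec_def by (rule arg_cong)
  also have "\<dots> = A l k" using k by (subst sum.delta) auto
  finally show "matvec d A (std_basis_vec k) l = A l k" .
next
  assume j: "j < d"
  have "(\<lambda>i. A j i * std_basis_vec j i) = (\<lambda>i. if i = j then A j j else 0)" (is "?f = ?g")
    by (auto simp: std_basis_vec_def)
  then have "matvec d A (std_basis_vec j) j = sum ?g {..<d}" unfolding matvec_def by (rule arg_cong)
  also have "\<dots> = A j j" using j by (subst sum.delta) auto
  finally show "cinner d (std_basis_vec j) (matvec d A (std_basis_vec j)) = A j j"
    using j by (simp add: cinner_std)
qed

lemma matvec_two: assumes "k \<noteq> l" "k < d" "l < d"
  shows "matvec d A (\<lambda>i. if i = k then a else if i = l then b else 0) j = A j k * a + A j l * b"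
proof -
  have v: "(\<lambda>i. if i = k then a else if i = l then b else 0) = (\<lambda>i. (if i = k then a else 0) + (if i = l then b else 0))"
    using assms by auto
  have e1: "(\<Sum>i<d. A j i * (if i = k then a else 0)) = A j k * a"
  proof -
    have "(\<lambda>i. A j i * (if i = k then a else 0)) = (\<lambda>i. if i = k then A j k * a else 0)" (is "?f = ?g") by auto
    then have "(\<Sum>i<d. ?f i) = sum ?g {..<d}" by (rule arg_cong)
    also have "sum ?g {..<d} = ?g k" using assms by (subst sum.delta) auto
    finally show ?thesis by simp
  qed
  have e2: "(\<Sum>i<d. A j i * (if i = l then b else 0)) = A j l * b"
  proof -
    have "(\<lambda>i. A j i * (if i = l then b else 0)) = (\<lambda>i. if i = l then A j l * b else 0)" (is "?f = ?g") by auto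
    then have "(\<Sum>i<d. ?f i) = sum ?g {..<d}" by (rule arg_cong)
    also have "sum ?g {..<d} = ?g l" using assms by (subst sum.delta) auto
    finally show ?thesis by simp
  qed
  show ?thesis unfolding v matvec_def distrib_left sum.distrib e1 e2 ..
qed

lemma Eph_prod: "n \<le> m \<Longrightarrow> cnj (Eph a n) * Eph a m = exp (\<i> * of_nat (m - n) * of_real a)"
  by (simp add: Eph_def exp_cnj exp_add[symmetric] of_nat_diff algebra_simps)

lemma p0_nz: assumes "orthonormal_polys p" shows "poly (p 0) z \<noteq> 0"
proof -
  obtain w where orth: "\<And>i j. has_bochner_integral lborel (\<lambda>x. poly (p j) x * poly (p i) x * w x) (if i = j then 1 else (0::real))"
    using assms(1) unfolding orthonormal_polys_def by blast
  have deg: "\<And>k. degree (p k) = k" using assms(1) unfolding orthonormal_polys_def by blast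
  have nz: "\<And>k. p k \<noteq> 0" using op_nz[OF orth] by blast
  have "poly (p 0) z = coeff (p 0) 0"
    proof -
      have e: "[:coeff (p 0) 0:] = p 0" by (rule degree_0_id[OF deg[of 0]])
      have h: "poly [:coeff (p 0) 0:] z = coeff (p 0) 0" by simp
      show ?thesis using h unfolding e .
    qed
  moreover have "coeff (p 0) 0 \<noteq> 0" using nz[of 0] deg[of 0] by (metis leading_coeff_0_iff)
  ultimately show ?thesis by simp
qed

lemma vecx_norm: assumes "orthonormal_polys p" "d \<ge> 1" shows "cvnorm d (vec_x d p a t) \<noteq> 0"
proof -
  have "(cmod (vec_x d p a t 0))\<^sup>2 \<le> (\<Sum>k<d. (cmod (vec_x d p a t k))\<^sup>2)"
    using assms(2) by (intro member_le_sum) auto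
  moreover have "cmod (vec_x d p a t 0) \<noteq> 0" using assms p0_nz[OF assms(1)] by (simp add: vec_x_def)
  ultimately have "(\<Sum>k<d. (cmod (vec_x d p a t k))\<^sup>2) > 0"
    by (metis less_le_trans zero_less_power2)
  then show ?thesis by (simp add: cvnorm_def)
qed




lemma coeff_pp_zero:
  assumes "\<And>k. degree (p k) = (k::nat)" "k + l < N"
  shows "coeff (p k * p l) N = 0"
proof -
  have "degree (p k * p l) \<le> k + l" using assms(1) by (metis degree_mult_le)
  then show ?thesis using assms(2) by (simp add: coeff_eq_0)
qed

lemma coeff_pp_top:
  assumes "\<And>k. degree (p k) = (k::nat)"
  shows "coeff (p k * p l) (k + l) = lead_coeff (p k) * lead_coeff (p l)"
  using coeff_mult_degree_sum[of "p k" "p l"] assms by simp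

theorem theorem1:
  fixes d :: nat and p :: "nat \<Rightarrow> real poly" and x y :: "nat \<Rightarrow> real" and \<alpha> :: real
    and \<psi> :: "nat \<Rightarrow> complex" and \<rho> :: "nat \<Rightarrow> nat \<Rightarrow> complex"
  assumes "d \<ge> 1"
    and "orthonormal_polys p"
    and "inj_on x {..<d}" and "x ` {..<d} = {t. poly (p d) t = 0}"
    and "inj_on y {..<d - 1}" and "y ` {..<d - 1} = {t. poly (p (d - 1)) t = 0}"
    and "\<forall>j\<in>{1..d - 1}. exp (\<i> * of_nat j * of_real \<alpha>) \<notin> \<real>"
    and "cvnorm d \<psi> = 1"
    and "density_matrix d \<rho>"
    and "\<forall>v \<in> basis0 d \<union> basis1 d p x \<union> basis2 d p \<alpha> x \<union> basis3 d p y \<union> basis4 d p \<alpha> y.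
           complex_of_real ((cmod (cinner d v \<psi>))\<^sup>2) = cinner d v (matvec d \<rho> v)"
  shows "\<forall>k<d. \<forall>l<d. \<rho> k l = \<psi> k * cnj (\<psi> l)"
proof -
  note hyp = assms(10)
  obtain w where orth: "\<And>i j. has_bochner_integral lborel (\<lambda>x. poly (p j) x * poly (p i) x * w x) (if i = j then 1 else (0::real))"
    using assms(2) unfolding orthonormal_polys_def by blast
  have deg: "\<And>k. degree (p k) = k" using assms(2) unfolding orthonormal_polys_def by blast
  have nz: "\<And>k. p k \<noteq> 0" using op_nz[OF orth] by blast
  define D where "D = (\<lambda>k l. \<rho> k l - \<psi> k * cnj (\<psi> l))"
  have psdr: "psd d \<rho>" using assms(9) unfolding density_matrix_def psd_def by blast
  have hermr: "\<And>k l. k < d \<Longrightarrow> l < d \<Longrightarrow> \<rho> k l = cnj (\<rho> l k)" using psd_herm[OF psdr] by blast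
  have hermD: "\<And>k l. k < d \<Longrightarrow> l < d \<Longrightarrow> D k l = cnj (D l k)"
  proof -
    fix k l assume "k < d" "l < d"
    then have "\<rho> k l = cnj (\<rho> l k)" by (rule hermr)
    then show "D k l = cnj (D l k)" by (simp add: D_def)
  qed
  define Bs where "Bs = basis0 d \<union> basis1 d p x \<union> basis2 d p \<alpha> x \<union> basis3 d p y \<union> basis4 d p \<alpha> y"
  have data: "\<And>v. v \<in> Bs \<Longrightarrow> cinner d v (matvec d D v) = 0"
  proof -
    fix v assume "v \<in> Bs"
    then have h: "complex_of_real ((cmod (cinner d v \<psi>))\<^sup>2) = cinner d v (matvec d \<rho> v)"
      using hyp unfolding Bs_def by blast
    have "cinner d v (matvec d D v) = cinner d v (matvec d \<rho> v) - cinner d v (matvec d (\<lambda>k l. \<psi> k * cnj (\<psi> l)) v)"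
      unfolding D_def matvec_diff cinner_diff ..
    then show "cinner d v (matvec d D v) = 0" using h form_rank1[of d v \<psi>] by simp
  qed
  have dataN: "\<And>v. normalize_vec d v \<in> Bs \<Longrightarrow> cvnorm d v \<noteq> 0 \<Longrightarrow> cinner d v (matvec d D v) = 0"
  proof -
    fix v assume "normalize_vec d v \<in> Bs" "cvnorm d v \<noteq> 0"
    then show "cinner d v (matvec d D v) = 0" using data form_normalize[of d v D] by simp
  qed
  have diag: "\<And>k. k < d \<Longrightarrow> D k k = 0"
  proof -
    fix k assume k: "k < d"
    have "std_basis_vec k \<in> Bs" using k unfolding Bs_def basis0_def by blast
    then show "D k k = 0" using data form_std[OF k, of D] by simp
  qed
  have xroot: "\<And>j. j < d \<Longrightarrow> poly (p d) (x j) = 0" using assms(4) by blast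
  have yroot: "\<And>j. j < d - 1 \<Longrightarrow> poly (p (d - 1)) (y j) = 0" using assms(6) by blast
  have vy: "\<And>a j. j < d - 1 \<Longrightarrow> vec_y d p a (y j) = vec_x d p a (y j)"
  proof -
    fix a j assume "j < d - 1"
    then have z: "poly (p (d - 1)) (y j) = 0" by (rule yroot)
    show "vec_y d p a (y j) = vec_x d p a (y j)"
    proof
      fix k show "vec_y d p a (y j) k = vec_x d p a (y j) k"
        using z by (cases "k = d - 1") (auto simp: vec_y_def vec_x_def)
    qed
  qed
  have PPzero: "PP d p a D = 0" if a: "a = 0 \<or> a = \<alpha>" for a
  proof (rule ccontr)
    assume q0: "PP d p a D \<noteq> 0"
    have roots_x: "poly (PP d p a D) (of_real (x j)) = 0" if j: "j < d" for j
    proof -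
      have "normalize_vec d (vec_x d p a (x j)) \<in> Bs"
        using a j unfolding Bs_def basis1_def basis2_def by blast
      then show ?thesis unfolding PP_eval using dataN vecx_norm[OF assms(2,1)] by blast
    qed
    have roots_y: "poly (PP d p a D) (of_real (y j)) = 0" if j: "j < d - 1" for j
    proof -
      have "normalize_vec d (vec_y d p a (y j)) \<in> Bs"
        using a j unfolding Bs_def basis3_def basis4_def by blast
      then have "normalize_vec d (vec_x d p a (y j)) \<in> Bs" using vy[OF j] by simp
      then show ?thesis unfolding PP_eval using dataN vecx_norm[OF assms(2,1)] by blast
    qed
    have hi: "coeff (PP d p a D) N = 0" if N: "N \<ge> 2 * d - 2" for N
    proof -
      have "cnj (Eph a k) * D k l * Eph a l * of_real (coeff (p k * p l) N) = 0" if "k < d" "l < d" for k l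
      proof (cases "k + l < N")
        case True then show ?thesis using coeff_pp_zero[OF deg True] by simp
      next
        case False
        then have "k = d - 1" "l = d - 1" using N that by auto
        then show ?thesis using diag[of "d - 1"] assms(1) by simp
      qed
      then show ?thesis unfolding PP_coeff by (intro sum.neutral ballI) auto
    qed
    have dlt: "degree (PP d p a D) < 2 * d - 2"
    proof (rule ccontr)
      assume "\<not> degree (PP d p a D) < 2 * d - 2"
      then have "coeff (PP d p a D) (degree (PP d p a D)) = 0" using hi by simp
      then show False using q0 by simp
    qed
    define S where "S = x ` {..<d} \<union> y ` {..<d - 1}"
    have disj: "x ` {..<d} \<inter> y ` {..<d - 1} = {}"
    proof (rule ccontr)
      assume "x ` {..<d} \<inter> y ` {..<d - 1} \<noteq> {}"
      then obtain t where t: "poly (p d) t = 0" "poly (p (d - 1)) t = 0" using assms(4,6) by blast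
      have "Suc (d - 1) = d" using assms(1) by simp
      then show False using op_nocommon[OF assms(2), of "d - 1" t] t by simp
    qed
    have cS: "card S = 2 * d - 1"
    proof -
      have "card S = card (x ` {..<d}) + card (y ` {..<d - 1})"
        unfolding S_def by (rule card_Un_disjoint) (use disj in auto)
      also have "\<dots> = d + (d - 1)" using assms(3,5) by (simp add: card_image)
      finally show ?thesis using assms(1) by simp
    qed
    have sub: "complex_of_real ` S \<subseteq> {z. poly (PP d p a D) z = 0}"
      unfolding S_def using roots_x roots_y by auto
    have ci: "card (complex_of_real ` S) = card S" by (rule card_image) (auto intro: inj_onI)
    have "card (complex_of_real ` S) \<le> card {z. poly (PP d p a D) z = 0}"
      by (rule card_mono[OF poly_roots_finite[OF q0] sub])
    also have "\<dots> \<le> degree (PP d p a D)" by (rule card_poly_roots_bound[OF q0])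
    finally show False using cS dlt ci by simp
  qed
  have "(\<Sum>k<d. (cmod (\<psi> k))\<^sup>2) = 1" using assms(8) unfolding cvnorm_def
    by (metis real_sqrt_eq_1_iff)
  then obtain k0 where k0: "k0 < d" "\<psi> k0 \<noteq> 0"
    by (metis (no_types, lifting) lessThan_iff norm_zero power_zero_numeral sum.neutral zero_neq_one)
  define M where "M = {k. k < d \<and> \<psi> k \<noteq> 0}"
  define m where "m = Max M"
  have finM: "finite M" unfolding M_def by simp
  have "m \<in> M" unfolding m_def using finM k0 by (intro Max_in) (auto simp: M_def)
  then have md: "m < d" and pm: "\<psi> m \<noteq> 0" by (auto simp: M_def)
  have above: "\<And>k. k < d \<Longrightarrow> m < k \<Longrightarrow> \<psi> k = 0"
  proof (rule ccontr)
    fix k assume "k < d" "m < k" "\<psi> k \<noteq> 0"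
    then have "k \<in> M" by (simp add: M_def)
    then have "k \<le> m" unfolding m_def using finM by simp
    then show False using \<open>m < k\<close> by simp
  qed
  have rho_eq: "\<And>k l. \<rho> k l = D k l + \<psi> k * cnj (\<psi> l)" by (simp add: D_def)
  have high: "\<And>k l. k < d \<Longrightarrow> l < d \<Longrightarrow> m < k \<or> m < l \<Longrightarrow> D k l = 0"
  proof -
    have col: "\<rho> l k = 0" if "k < d" "l < d" "m < k" for k l
    proof -
      have "\<rho> k k = 0" using diag[OF that(1)] above[OF that(1,3)] rho_eq[of k k] by simp
      then have "cinner d (std_basis_vec k) (matvec d \<rho> (std_basis_vec k)) = 0"
        using form_std[OF that(1)] by simp
      then have "matvec d \<rho> (std_basis_vec k) l = 0" by (rule psd_kernel[OF psdr _ that(2)])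
      then show ?thesis using matvec_std[OF that(1)] by simp
    qed
    fix k l assume kl: "k < d" "l < d" "m < k \<or> m < l"
    show "D k l = 0"
    proof (cases "m < k")
      case True
      have "\<rho> l k = 0" by (rule col[OF kl(1,2) True])
      then have "\<rho> k l = 0" using hermr[OF kl(1,2)] by simp
      then show ?thesis using above[OF kl(1) True] by (simp add: D_def)
    next
      case False
      then have "m < l" using kl by simp
      have "\<rho> k l = 0" by (rule col[OF kl(2,1) \<open>m < l\<close>])
      then show ?thesis using above[OF kl(2) \<open>m < l\<close>] by (simp add: D_def)
    qed
  qed
  define Inv where "Inv = (\<lambda>n. \<forall>k<d. \<forall>l<d. n \<le> k \<longrightarrow> n \<le> l \<longrightarrow> D k l = 0)"
  have base: "Inv m"
    unfolding Inv_def
  proof (intro allI impI)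
    fix k l assume "k < d" "l < d" "m \<le> k" "m \<le> l"
    then show "D k l = 0"
      using diag high by (cases "k = m \<and> l = m") auto
  qed
  have step: "Inv n" if n: "n < m" and IH: "Inv (Suc n)" for n
  proof -
    have nd: "n < d" using n md by simp
    have IH': "\<And>k l. k < d \<Longrightarrow> l < d \<Longrightarrow> Suc n \<le> k \<Longrightarrow> Suc n \<le> l \<Longrightarrow> D k l = 0"
      using IH unfolding Inv_def by blast
    define L where "L = complex_of_real (lead_coeff (p n) * lead_coeff (p m))"
    have Lnz: "L \<noteq> 0" using nz by (simp add: L_def)
    have coef: "cnj (Eph a n) * Eph a m * D n m + cnj (Eph a m) * Eph a n * D m n = 0"
      if a: "a = 0 \<or> a = \<alpha>" for a
    proof -
      define T where "T = (\<lambda>k l. cnj (Eph a k) * D k l * Eph a l * of_real (coeff (p k * p l) (n + m)))"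
      have Tz: "T k l = (if k = n \<and> l = m then T n m else if k = m \<and> l = n then T m n else 0)"
        if kl: "k < d" "l < d" for k l
      proof (cases "(k = n \<and> l = m) \<or> (k = m \<and> l = n)")
        case True then show ?thesis by auto
      next
        case False
        have "T k l = 0"
        proof (cases "D k l = 0")
          case True then show ?thesis by (simp add: T_def)
        next
          case Dnz: False
          have "k \<le> m" "l \<le> m" using high[OF kl] Dnz by (meson not_le)+
          moreover have "k \<le> n \<or> l \<le> n" using IH'[OF kl] Dnz by (metis not_less_eq_eq)
          ultimately have "k + l < n + m" using False by auto
          then show ?thesis using coeff_pp_zero[OF deg] by (simp add: T_def)
        qed
        moreover have nA: "\<not> (k = n \<and> l = m)" and nB: "\<not> (k = m \<and> l = n)" using False by auto
        ultimately show ?thesis by (simp only: if_not_P[OF nA] if_not_P[OF nB] if_False)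
      qed
      have "0 = coeff (PP d p a D) (n + m)" using PPzero[OF a] by simp
      also have "\<dots> = (\<Sum>k<d. \<Sum>l<d. T k l)" unfolding PP_coeff T_def ..
      also have "\<dots> = (\<Sum>k<d. \<Sum>l<d. if k = n \<and> l = m then T n m else if k = m \<and> l = n then T m n else 0)"
        by (intro sum.cong refl; rule Tz; simp)
      also have "\<dots> = T n m + T m n" using n md nd by (intro sum2_delta) auto
      also have "\<dots> = (cnj (Eph a n) * Eph a m * D n m + cnj (Eph a m) * Eph a n * D m n) * L"
      proof -
        have c1: "coeff (p n * p m) (n + m) = lead_coeff (p n) * lead_coeff (p m)"
          by (rule coeff_pp_top[OF deg])
        have c2: "coeff (p m * p n) (n + m) = lead_coeff (p n) * lead_coeff (p m)"
          using coeff_pp_top[OF deg, of m n] by (simp add: add.commute mult.commute)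
        show ?thesis unfolding T_def c1 c2 L_def by (simp add: algebra_simps)
      qed
      finally show ?thesis using Lnz by simp
    qed
    have Dmn: "D m n = cnj (D n m)" using hermD md nd by blast
    have re0: "Re (D n m) = 0" using coef[of 0] Dmn by (simp add: Eph_def complex_eq_iff)
    define \<zeta> where "\<zeta> = exp (\<i> * of_nat (m - n) * of_real \<alpha>)"
    have z1: "cnj (Eph \<alpha> n) * Eph \<alpha> m = \<zeta>" using Eph_prod[of n m \<alpha>] n by (simp add: \<zeta>_def)
    have z2: "cnj (Eph \<alpha> m) * Eph \<alpha> n = cnj \<zeta>"
      using arg_cong[OF z1, of cnj] by (simp add: mult.commute)
    have "m - n \<in> {1..d - 1}" using n md by auto
    then have "\<zeta> \<notin> \<real>" using assms(7) by (simp add: \<zeta>_def)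
    then have imz: "Im \<zeta> \<noteq> 0" by (simp add: complex_is_Real_iff)
    have "\<zeta> * D n m + cnj \<zeta> * cnj (D n m) = 0" using coef[of \<alpha>] z1 z2 Dmn by simp
    then have "Re (\<zeta> * D n m) = 0" by (simp add: complex_eq_iff)
    then have "Im \<zeta> * Im (D n m) = 0" using re0 by simp
    then have "Im (D n m) = 0" using imz by simp
    then have Dnm: "D n m = 0" using re0 by (simp add: complex_eq_iff)
    have Dmn0: "D m n = 0" using Dmn Dnm by simp
    have nm: "n \<noteq> m" using n by simp
    define u where "u = (\<lambda>i. if i = n then cnj (\<psi> m) else if i = m then - cnj (\<psi> n) else 0)"
    have "cinner d u (matvec d \<rho> u) =
       cnj (cnj (\<psi> m)) * \<rho> n n * cnj (\<psi> m) + cnj (cnj (\<psi> m)) * \<rho> n m * (- cnj (\<psi> n))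
       + cnj (- cnj (\<psi> n)) * \<rho> m n * cnj (\<psi> m) + cnj (- cnj (\<psi> n)) * \<rho> m m * (- cnj (\<psi> n))"
      unfolding u_def by (rule form_two[OF nm nd md])
    also have "\<dots> = 0"
      using diag[OF nd] diag[OF md] Dnm Dmn0 rho_eq[of n n] rho_eq[of n m] rho_eq[of m n] rho_eq[of m m]
      by (simp add: algebra_simps)
    finally have u0: "cinner d u (matvec d \<rho> u) = 0" .
    have coln: "D l n = 0" if l: "l < d" "n \<le> l" for l
    proof -
      have "matvec d \<rho> u l = 0" by (rule psd_kernel[OF psdr u0 l(1)])
      then have e: "\<rho> l n * cnj (\<psi> m) + \<rho> l m * (- cnj (\<psi> n)) = 0"
        unfolding u_def matvec_two[OF nm nd md] .
      have "D l m = 0"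
      proof (cases "l = n")
        case True then show ?thesis using Dnm by simp
      next
        case False then show ?thesis using IH'[OF l(1) md] l n by simp
      qed
      then have "\<rho> l m = \<psi> l * cnj (\<psi> m)" using rho_eq[of l m] by simp
      then have "(\<rho> l n - \<psi> l * cnj (\<psi> n)) * cnj (\<psi> m) = 0" using e by (simp add: algebra_simps)
      then show ?thesis using pm by (simp add: D_def)
    qed
    show "Inv n" unfolding Inv_def
    proof (intro allI impI)
      fix k l assume kl: "k < d" "l < d" "n \<le> k" "n \<le> l"
      show "D k l = 0"
      proof (cases "k = n")
        case True
        have "D l n = 0" by (rule coln[OF kl(2,4)])
        then show ?thesis using hermD[OF kl(1,2)] True by simp
      next
        case False
        show ?thesis
        proof (cases "l = n")
          case True then show ?thesis using coln[OF kl(1,3)] by simp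
        next
          case False2: False
          then show ?thesis using IH'[OF kl(1,2)] kl False by simp
        qed
      qed
    qed
  qed
  have "\<forall>j\<le>m. Inv (m - j)"
  proof (intro allI impI)
    fix j show "j \<le> m \<Longrightarrow> Inv (m - j)"
    proof (induction j)
      case 0 then show ?case using base by simp
    next
      case (Suc j)
      then have "Inv (m - j)" by simp
      moreover have "m - j = Suc (m - Suc j)" using Suc.prems by simp
      ultimately show ?case using step[of "m - Suc j"] Suc.prems by simp
    qed
  qed
  then have "Inv 0" by (metis diff_self_eq_0 order_refl)
  then show ?thesis unfolding Inv_def D_def by simp
qed


end
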